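(* Let $q$ be a prime power, let $0\le t\le q^2-2$ with $q$-adic expression $t=b_0+b_1q$ ($0\le b_0,b_1\le q-1$), let $\Delta=\{0,1,\ldots,t\}$ and let $E=D_\Delta\subseteq\mathbb{F}_{q^2}^{q^2}$ be the corresponding (extended) Reed–Solomon code obtained by evaluating at all elements of $\mathbb{F}_{q^2}$. Then the EAQECC associated with $E$ (Hermitian construction) has parameters $$[[q^2,\,(q-b_1)^2-2b_0-2,\,t+2;\,b_1^2]]_q$$ when $b_0+b_1<q-1$, and parameters $$[[q^2,\,(q-b_1-1)^2,\,t+2;\,b_1^2+2(b_0+b_1-q)+3]]_q$$ otherwise (i.e. when $b_0+b_1\ge q-1$).
   Context: Let $P_1,\dots,P_{q^2}$ be all the elements of $\mathbb{F}_{q^2}$ (the roots of $X^{q^2}-X$). For $\Delta\subseteq\{0,1,\ldots,q^2-2\}$, $D_\Delta$ is the $\mathbb{F}_{q^2}$-linear code spanned by the vectors $(P_1^i,\dots,P_{q^2}^i)$, $i\in\Delta$ (with $0^0=1$). The Hermitian inner product on $\mathbb{F}_{q^2}^N$ is $x\cdot y=\sum_{i} x_iy_i^q$. For a linear code $E\subseteq\mathbb{F}_{q^2}^N$ of dimension $k$ whose Hermitian dual $C$ has minimum distance $d$, the associated EAQECC is an entanglement-assisted quantum error-correcting code over $\mathbb{F}_q$ with parameters $[[N,\,N-2k+c,\,d;\,c]]_q$, where $c=\dim E-\dim(E\cap C)$. *)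

theory Defs
  imports Complex_Main "HOL-Computational_Algebra.Primes" "HOL-Library.Function_Algebras"
begin

text \<open>Vectors of length q^2 are indexed by the elements of the field itself:
  the coordinate at P is the value at P. The field 'a plays the role of F_{q^2}.\<close>

definition fscale :: "'a::field \<Rightarrow> ('a \<Rightarrow> 'a) \<Rightarrow> ('a \<Rightarrow> 'a)" where
  "fscale c f = (\<lambda>x. c * f x)"

definition code_dim :: "('a::field \<Rightarrow> 'a) set \<Rightarrow> nat" where
  "code_dim V = vector_space.dim fscale V"

text \<open>D_Delta: span of the evaluation vectors (P^i)_P, i in Delta (0^0 = 1 in Isabelle).\<close>
definition D_code :: "nat set \<Rightarrow> ('a::{finite,field} \<Rightarrow> 'a) set" where
  "D_code \<Delta> = module.span fscale ((\<lambda>i. (\<lambda>P. P ^ i)) ` \<Delta>)"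

definition herm_ip :: "nat \<Rightarrow> ('a::{finite,field} \<Rightarrow> 'a) \<Rightarrow> ('a \<Rightarrow> 'a) \<Rightarrow> 'a" where
  "herm_ip q x y = (\<Sum>P\<in>UNIV. x P * (y P) ^ q)"

definition herm_dual :: "nat \<Rightarrow> ('a::{finite,field} \<Rightarrow> 'a) set \<Rightarrow> ('a \<Rightarrow> 'a) set" where
  "herm_dual q E = {y. \<forall>x\<in>E. herm_ip q x y = 0}"

definition hamming_wt :: "('a::{finite,field} \<Rightarrow> 'a) \<Rightarrow> nat" where
  "hamming_wt y = card {P. y P \<noteq> 0}"

definition min_dist :: "('a::{finite,field} \<Rightarrow> 'a) set \<Rightarrow> nat" where
  "min_dist C = Min (hamming_wt ` (C - {0}))"

text \<open>Parameters [[N, N - 2k + c, d; c]]_q of the EAQECC associated with E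
  (Hermitian construction), where k = dim E, C = Hermitian dual of E, d = d(C),
  c = dim E - dim (E \<inter> C).\<close>
definition eaqecc_params :: "nat \<Rightarrow> ('a::{finite,field} \<Rightarrow> 'a) set \<Rightarrow> nat \<times> int \<times> nat \<times> nat" where
  "eaqecc_params q E =
    (let N = card (UNIV :: 'a set); k = code_dim E; C = herm_dual q E;
         c = code_dim E - code_dim (E \<inter> C)
     in (N, int N - 2 * int k + int c, min_dist C, c))"

definition prime_power :: "nat \<Rightarrow> bool" where
  "prime_power q \<longleftrightarrow> (\<exists>p n. prime p \<and> n > 0 \<and> q = p ^ n)"

end

theory Submission
  imports Defs "HOL-Number_Theory.Residues" "HOL-Computational_Algebra.Polynomial"
begin


lemma sum_fun_apply': "(\<Sum>i\<in>A. f i) x = (\<Sum>i\<in>A. f i x)"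
  by (induction A rule: infinite_finite_induct) auto

interpretation fs: vector_space "fscale :: 'a::field \<Rightarrow> ('a \<Rightarrow> 'a) \<Rightarrow> ('a \<Rightarrow> 'a)"
  by unfold_locales (auto simp: fscale_def fun_eq_iff algebra_simps)

lemma code_dim_eq: "code_dim V = fs.dim V" unfolding code_dim_def ..
lemma D_code_eq: "D_code D = fs.span ((\<lambda>i P. P ^ i) ` D)" unfolding D_code_def ..

lemma pow_card_same:
  fixes x :: "'a::{finite,field}"
  shows "x ^ card (UNIV :: 'a set) = x"
proof (cases "x = 0")
  case False
  have "x * (\<Prod>y\<in>UNIV-{0}. x * y) = x * x ^ (card (UNIV :: 'a set) - 1) * \<Prod>(UNIV-{0})"
    by (simp add: prod.distrib mult_ac)
  also have "x * x ^ (card (UNIV :: 'a set) - 1) = x ^ Suc (card (UNIV :: 'a set) - 1)"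
    by (subst power_Suc) auto
  also have "Suc (card (UNIV :: 'a set) - 1) = card (UNIV :: 'a set)"
    using finite_UNIV_card_ge_0[where ?'a = 'a] by simp
  also have "(\<Prod>y\<in>UNIV-{0}. x * y) = (\<Prod>y\<in>UNIV-{0}. y)"
    by (rule prod.reindex_bij_witness[of _ "\<lambda>y. y / x" "\<lambda>y. x * y"]) (use False in auto)
  finally show ?thesis
    by simp
qed (use finite_UNIV_card_ge_0[where ?'a = 'a] in auto)

lemma pow_card1:
  fixes x :: "'a::{finite,field}"
  assumes "x \<noteq> 0"
  shows "x ^ (card (UNIV :: 'a set) - 1) = 1"
proof -
  have c: "card (UNIV :: 'a set) = Suc (card (UNIV :: 'a set) - 1)"
    using finite_UNIV_card_ge_0[where ?'a = 'a] by simp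
  have "x * x ^ (card (UNIV :: 'a set) - 1) = x * 1"
    using pow_card_same[of x] by (subst (asm) c) simp
  thus ?thesis using assms by simp
qed

lemma of_nat_card0: "of_nat (card (UNIV :: 'a::{finite,field} set)) = (0::'a)"
  using CHAR_dvd_CARD[where 'a='a] of_nat_eq_0_iff_char_dvd by blast

lemma card_ge2: "card (UNIV :: 'a::{finite,field} set) \<ge> 2"
proof -
  have "{0::'a, 1} \<subseteq> UNIV" by auto
  hence "card {0::'a,1} \<le> card (UNIV :: 'a set)" by (rule card_mono[OF finite])
  thus ?thesis by simp
qed

lemma exists_not_root:
  fixes k :: nat
  assumes "0 < k" "k < card (UNIV :: 'a::{finite,field} set) - 1"
  shows "\<exists>a::'a. a \<noteq> 0 \<and> a ^ k \<noteq> 1"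
proof (rule ccontr)
  assume "\<not> ?thesis"
  hence sub: "UNIV - {0} \<subseteq> {x::'a. poly (monom 1 k - 1) x = 0}"
    by (auto simp: poly_monom)
  have ne: "monom (1::'a) k - 1 \<noteq> 0"
  proof
    assume "monom (1::'a) k - 1 = 0"
    hence "coeff (monom (1::'a) k - 1) k = 0" by simp
    thus False using assms(1) by simp
  qed
  have deg: "degree (monom (1::'a) k - 1) \<le> k"
    by (intro degree_diff_le) (auto simp: degree_monom_le)
  have "card (UNIV - {0::'a}) \<le> card {x::'a. poly (monom 1 k - 1) x = 0}"
    by (rule card_mono[OF finite sub])
  also have "\<dots> \<le> k" using card_poly_roots_bound[OF ne] deg by simp
  finally show False using assms(2) by (simp add: card_Diff_singleton)
qed

lemma psum:
  fixes k :: nat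
  shows "(\<Sum>P\<in>(UNIV::'a::{finite,field} set). P ^ k) =
     (if 0 < k \<and> (card (UNIV::'a set) - 1) dvd k then -1 else 0)"
proof -
  let ?N = "card (UNIV::'a set)"
  have N2: "?N \<ge> 2" by (rule card_ge2)
  consider "k = 0" | "0 < k" "(?N - 1) dvd k" | "0 < k" "\<not> (?N - 1) dvd k" by blast
  thus ?thesis
  proof cases
    case 1
    thus ?thesis using of_nat_card0[where 'a='a] by simp
  next
    case 2
    then obtain r where r: "k = (?N - 1) * r" by blast
    have "(\<Sum>P\<in>(UNIV::'a set). P ^ k) = (\<Sum>P\<in>UNIV - {0}. P ^ k) + 0 ^ k"
      by (subst sum.remove[of _ 0]) (auto simp: add.commute)
    also have "(\<Sum>P\<in>UNIV - {0::'a}. P ^ k) = (\<Sum>P\<in>UNIV - {0::'a}. 1)"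
      proof (rule sum.cong)
      fix P :: 'a assume "P \<in> UNIV - {0}"
      hence "P ^ (?N - 1) = 1" by (intro pow_card1) auto
      thus "P ^ k = 1" by (simp add: r power_mult)
    qed simp
    also have "\<dots> = of_nat (?N - 1)" by (simp add: card_Diff_singleton)
    also have "\<dots> = of_nat ?N - 1" using N2 by (simp add: of_nat_diff)
    finally show ?thesis using 2 of_nat_card0[where 'a='a] by simp
  next
    case 3
    define k' where "k' = k mod (?N - 1)"
    have k'pos: "0 < k'" using 3 unfolding k'_def by (simp add: dvd_eq_mod_eq_0)
    have k'lt: "k' < ?N - 1" using N2 unfolding k'_def by simp
    have pk: "x ^ k = x ^ k'" if "x \<noteq> 0" for x :: 'a
    proof -
      have "k = (?N - 1) * (k div (?N - 1)) + k'" unfolding k'_def by simp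
      hence "x ^ k = (x ^ (?N - 1)) ^ (k div (?N - 1)) * x ^ k'"
        by (metis power_add power_mult)
      thus ?thesis using pow_card1[OF that] by simp
    qed
    obtain a :: 'a where a: "a \<noteq> 0" "a ^ k' \<noteq> 1" using exists_not_root[OF k'pos k'lt] by blast
    have "(\<Sum>P\<in>(UNIV::'a set). (a * P) ^ k) = (\<Sum>P\<in>(UNIV::'a set). P ^ k)"
      by (rule sum.reindex_bij_witness[of _ "\<lambda>y. y / a" "\<lambda>y. a * y"]) (use a in auto)
    hence "a ^ k * (\<Sum>P\<in>(UNIV::'a set). P ^ k) = 1 * (\<Sum>P\<in>(UNIV::'a set). P ^ k)"
      by (simp add: power_mult_distrib sum_distrib_left)
    moreover have "a ^ k \<noteq> 1" using a pk by simp
    ultimately have "(\<Sum>P\<in>(UNIV::'a set). P ^ k) = 0"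
      by (metis mult_cancel_right)
    thus ?thesis using 3 by simp
  qed
qed



definition lc :: "(nat \<Rightarrow> 'a::field) \<Rightarrow> nat set \<Rightarrow> ('a \<Rightarrow> 'a)" where
  "lc c A = (\<Sum>i\<in>A. fscale (c i) (\<lambda>P. P ^ i))"

lemma lc_apply: "lc c A P = (\<Sum>i\<in>A. c i * P ^ i)"
  unfolding lc_def sum_fun_apply' by (simp add: fscale_def)

lemma psum_off:
  assumes "i \<le> card (UNIV::'a::{finite,field} set) - 2" "j \<le> card (UNIV::'a set) - 2"
  shows "(\<Sum>P\<in>(UNIV::'a set). P ^ (card (UNIV::'a set) - 1 - j + i)) = (if i = j then -1 else 0)"
proof -
  let ?N = "card (UNIV::'a set)"
  have N2: "?N \<ge> 2" by (rule card_ge2)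
  let ?k = "?N - 1 - j + i"
  have kpos: "0 < ?k" using assms N2 by simp
  have "(?N - 1) dvd ?k \<longleftrightarrow> i = j"
  proof
    assume "(?N - 1) dvd ?k"
    then obtain r where r: "?k = (?N - 1) * r" by blast
    have "r \<noteq> 0" using r kpos by auto
    moreover have "r < 2"
    proof (rule ccontr)
      assume "\<not> r < 2"
      hence "(?N - 1) * 2 \<le> (?N - 1) * r" by simp
      thus False using r assms N2 by linarith
    qed
    ultimately have "r = 1" by linarith
    hence "?k = ?N - 1" using r by simp
    thus "i = j" using assms N2 by linarith
  next
    assume "i = j"
    hence "?k = ?N - 1" using assms N2 by linarith
    thus "(?N - 1) dvd ?k" by simp
  qed
  note dv = this
  have "(\<Sum>P\<in>(UNIV::'a set). P ^ ?k) = (if 0 < ?k \<and> (?N - 1) dvd ?k then -1 else 0)"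
    by (rule psum)
  also have "\<dots> = (if i = j then -1 else 0)" using kpos dv by simp
  finally show ?thesis .
qed

lemma coef_extract:
  assumes "A \<subseteq> {..card (UNIV::'a::{finite,field} set) - 2}" "j \<le> card (UNIV::'a set) - 2"
  shows "- (\<Sum>P\<in>(UNIV::'a set). P ^ (card (UNIV::'a set) - 1 - j) * lc c A P) = (if j \<in> A then c j else 0)"
proof -
  let ?N = "card (UNIV::'a set)"
  have fA: "finite A" using assms(1) finite_subset by blast
  have "(\<Sum>P\<in>(UNIV::'a set). P ^ (?N - 1 - j) * lc c A P)
      = (\<Sum>i\<in>A. c i * (\<Sum>P\<in>(UNIV::'a set). P ^ (?N - 1 - j + i)))"
    unfolding lc_apply by (simp add: sum_distrib_left sum_distrib_right power_add mult_ac sum.swap[of _ UNIV A])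
  also have "\<dots> = (\<Sum>i\<in>A. c i * (if i = j then -1 else 0))"
  proof (rule sum.cong[OF refl])
    fix i assume "i \<in> A" hence "i \<le> ?N - 2" using assms by auto
    show "c i * (\<Sum>P\<in>(UNIV::'a set). P ^ (?N - 1 - j + i)) = c i * (if i = j then -1 else 0)"
      by (simp only: psum_off[OF \<open>i \<le> ?N - 2\<close> assms(2)])
  qed
  also have "\<dots> = (if j \<in> A then - c j else 0)"
    using fA by (simp add: if_distrib sum.delta cong: if_cong)
  finally show ?thesis by simp
qed

lemma mon_inj: "inj_on (\<lambda>i (P::'a::{finite,field}). P ^ i) {..card (UNIV::'a set) - 2}"
proof (rule inj_onI)
  fix i j assume i: "i \<in> {..card (UNIV::'a set) - 2}" and j: "j \<in> {..card (UNIV::'a set) - 2}"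
    and eq: "(\<lambda>P::'a. P ^ i) = (\<lambda>P. P ^ j)"
  have "lc (\<lambda>_. 1) {i} = (lc (\<lambda>_. 1) {j} :: 'a \<Rightarrow> 'a)"
    using eq by (simp add: lc_def fscale_def)
  hence "- (\<Sum>P\<in>(UNIV::'a set). P ^ (card (UNIV::'a set) - 1 - j) * lc (\<lambda>_. 1) {i} P)
       = - (\<Sum>P\<in>(UNIV::'a set). P ^ (card (UNIV::'a set) - 1 - j) * lc (\<lambda>_. 1) {j} P)" by simp
  thus "i = j" using i j
    by (subst (asm) (1 2) coef_extract) (auto split: if_splits)
qed

lemma mon_indep:
  assumes "A \<subseteq> {..card (UNIV::'a::{finite,field} set) - 2}"
  shows "fs.independent ((\<lambda>i (P::'a). P ^ i) ` A)"
proof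
  let ?m = "\<lambda>i (P::'a). P ^ i"
  have fA: "finite A" using assms(1) finite_subset by blast
  have inj: "inj_on ?m A" using mon_inj inj_on_subset assms by blast
  assume "fs.dependent (?m ` A)"
  then obtain u v where uv: "v \<in> ?m ` A" "u v \<noteq> 0" "(\<Sum>v\<in>?m ` A. fscale (u v) v) = 0"
    using fs.dependent_finite[of "?m ` A"] fA by blast
  obtain j where j: "j \<in> A" "v = ?m j" using uv(1) by blast
  have "lc (\<lambda>i. u (?m i)) A = 0"
    using uv(3) unfolding lc_def by (simp add: sum.reindex[OF inj])
  hence "- (\<Sum>P\<in>(UNIV::'a set). P ^ (card (UNIV::'a set) - 1 - j) * lc (\<lambda>i. u (?m i)) A P) = 0"
    by simp
  moreover have "- (\<Sum>P\<in>(UNIV::'a set). P ^ (card (UNIV::'a set) - 1 - j) * lc (\<lambda>i. u (?m i)) A P)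
     = (if j \<in> A then u (?m j) else 0)"
    by (rule coef_extract[OF assms]) (use j assms in auto)
  ultimately have "u (?m j) = 0" using j by simp
  thus False using uv j by simp
qed

lemma mon_span:
  assumes "A \<subseteq> {..card (UNIV::'a::{finite,field} set) - 2}"
  shows "fs.span ((\<lambda>i (P::'a). P ^ i) ` A) = range (\<lambda>c. lc c A)"
proof -
  let ?m = "\<lambda>i (P::'a). P ^ i"
  have fA: "finite A" using assms(1) finite_subset by blast
  have inj: "inj_on ?m A" using mon_inj inj_on_subset assms by blast
  have "fs.span (?m ` A) = range (\<lambda>u. \<Sum>v\<in>?m ` A. fscale (u v) v)"
    using fs.span_finite fA by blast
  also have "\<dots> = range (\<lambda>c. lc c A)"
  proof safe
    fix u show "(\<Sum>v\<in>?m ` A. fscale (u v) v) \<in> range (\<lambda>c. lc c A)"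
      by (rule range_eqI[of _ _ "\<lambda>i. u (?m i)"]) (simp add: lc_def sum.reindex[OF inj])
  next
    fix c show "lc c A \<in> range (\<lambda>u. \<Sum>v\<in>?m ` A. fscale (u v) v)"
    proof (rule range_eqI[of _ _ "\<lambda>v. c (the_inv_into A ?m v)"])
      show "lc c A = (\<Sum>v\<in>?m ` A. fscale (c (the_inv_into A ?m v)) v)"
        unfolding lc_def sum.reindex[OF inj] using the_inv_into_f_f[OF inj]
        by (intro sum.cong) auto
    qed
  qed
  finally show ?thesis .
qed

lemma mon_dim:
  assumes "A \<subseteq> {..card (UNIV::'a::{finite,field} set) - 2}"
  shows "fs.dim (fs.span ((\<lambda>i (P::'a). P ^ i) ` A)) = card A"
proof -
  have inj: "inj_on (\<lambda>i (P::'a). P ^ i) A" using mon_inj inj_on_subset assms by blast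
  show ?thesis using fs.dim_span_eq_card_independent[OF mon_indep[OF assms]] card_image[OF inj] by simp
qed



lemma herm_lin: "finite A \<Longrightarrow> herm_ip q (lc c A) y = (\<Sum>j\<in>A. c j * herm_ip q (\<lambda>P. P ^ j) y)"
  unfolding herm_ip_def lc_apply
  by (simp add: sum_distrib_left sum_distrib_right mult_ac sum.swap[of _ A UNIV])

lemma sum_ind: "finite A \<Longrightarrow> (\<Sum>i\<in>A. (if i = j then 1 else 0) * h i) = (if j \<in> A then h j else (0::'a::comm_ring_1))"
proof -
  assume "finite A"
  have "(\<Sum>i\<in>A. (if i = j then 1 else 0) * h i) = (\<Sum>i\<in>A. if i = j then h i else 0)"
    by (rule sum.cong) auto
  thus ?thesis using \<open>finite A\<close> by (simp add: sum.delta)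
qed

lemma dual_char:
  assumes "t \<le> card (UNIV::'a::{finite,field} set) - 2"
  shows "y \<in> herm_dual q (fs.span ((\<lambda>i (P::'a). P ^ i) ` {0..t})) \<longleftrightarrow>
         (\<forall>j\<le>t. herm_ip q (\<lambda>P. P ^ j) y = 0)"
proof -
  have sub: "{0..t} \<subseteq> {..card (UNIV::'a set) - 2}" using assms by auto
  show ?thesis
    unfolding herm_dual_def mon_span[OF sub]
  proof safe
    fix j assume "\<forall>x\<in>range (\<lambda>c. lc c {0..t}). herm_ip q x y = 0" "j \<le> t"
    hence "herm_ip q (lc (\<lambda>i. if i = j then 1 else 0) {0..t}) y = 0" by blast
    thus "herm_ip q (\<lambda>P. P ^ j) y = 0" using \<open>j \<le> t\<close>
      by (subst (asm) herm_lin) (simp_all add: sum_ind)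
  next
    fix c assume "\<forall>j\<le>t. herm_ip q (\<lambda>P. P ^ j) y = 0"
    thus "herm_ip q (lc c {0..t}) y = 0" by (subst herm_lin) auto
  qed
qed

lemma poly_in_E:
  assumes "t \<le> card (UNIV::'a::{finite,field} set) - 2" "degree p \<le> t"
  shows "(\<lambda>x. poly p x) \<in> fs.span ((\<lambda>i (P::'a). P ^ i) ` {0..t})"
proof -
  have sub: "{0..t} \<subseteq> {..card (UNIV::'a set) - 2}" using assms by auto
  have "(\<lambda>x. poly p x) = lc (coeff p) {0..t}"
  proof
    fix x
    have "poly p x = (\<Sum>i\<le>degree p. coeff p i * x ^ i)" by (rule poly_altdef)
    also have "\<dots> = (\<Sum>i\<in>{0..t}. coeff p i * x ^ i)"
      by (rule sum.mono_neutral_left) (use assms in \<open>auto simp: coeff_eq_0\<close>)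
    finally show "poly p x = lc (coeff p) {0..t} x" by (simp add: lc_apply)
  qed
  thus ?thesis unfolding mon_span[OF sub] by simp
qed

lemma wt_lower:
  assumes "t \<le> card (UNIV::'a::{finite,field} set) - 2" "0 < q"
    and y: "y \<in> herm_dual q (fs.span ((\<lambda>i (P::'a). P ^ i) ` {0..t}))" "y \<noteq> 0"
  shows "t + 2 \<le> hamming_wt y"
proof (rule ccontr)
  define Z where "Z = {P. y P \<noteq> 0}"
  assume "\<not> t + 2 \<le> hamming_wt y"
  hence cZ: "card Z \<le> t + 1" unfolding hamming_wt_def Z_def by simp
  obtain P0 where P0: "y P0 \<noteq> 0" using y(2) by (auto simp: fun_eq_iff)
  hence P0Z: "P0 \<in> Z" by (simp add: Z_def)
  define f where "f = (\<Prod>Q\<in>Z-{P0}. [:-Q, 1:])"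
  have "degree f \<le> sum (degree \<circ> (\<lambda>Q. [:-Q, 1::'a:])) (Z - {P0})"
    unfolding f_def by (rule degree_prod_sum_le) simp
  also have "\<dots> = card (Z - {P0})" by simp
  also have "\<dots> \<le> t" using cZ P0Z by (simp add: card_Diff_singleton)
  finally have df: "degree f \<le> t" .
  have fE: "(\<lambda>x. poly f x) \<in> fs.span ((\<lambda>i (P::'a). P ^ i) ` {0..t})"
    by (rule poly_in_E[OF assms(1) df])
  hence "herm_ip q (\<lambda>x. poly f x) y = 0" using y(1) unfolding herm_dual_def by blast
  moreover have "herm_ip q (\<lambda>x. poly f x) y = poly f P0 * y P0 ^ q"
  proof -
    have "(\<Sum>P\<in>UNIV. poly f P * y P ^ q) = poly f P0 * y P0 ^ q + (\<Sum>P\<in>UNIV-{P0}. poly f P * y P ^ q)"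
      by (subst sum.remove[of _ P0]) auto
    also have "(\<Sum>P\<in>UNIV-{P0}. poly f P * y P ^ q) = 0"
    proof (rule sum.neutral, rule ballI)
      fix P assume P: "P \<in> UNIV - {P0}"
      show "poly f P * y P ^ q = 0"
      proof (cases "P \<in> Z")
        case True
        hence "poly f P = 0" using P unfolding f_def poly_prod
          by (subst prod_zero_iff) auto
        thus ?thesis by simp
      next
        case False
        thus ?thesis using assms(2) by (simp add: Z_def)
      qed
    qed
    finally show ?thesis by (simp add: herm_ip_def)
  qed
  moreover have "poly f P0 \<noteq> 0" unfolding f_def poly_prod
    by (subst prod_zero_iff) auto
  ultimately show False using P0 by simp
qed

lemma wt_upper:
  assumes "t \<le> card (UNIV::'a::{finite,field} set) - 2" "card (UNIV::'a set) = q ^ 2"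
  shows "\<exists>y. y \<in> herm_dual q (fs.span ((\<lambda>i (P::'a). P ^ i) ` {0..t})) \<and> y \<noteq> 0 \<and> hamming_wt y = t + 2"
proof -
  let ?N = "card (UNIV::'a set)"
  have N2: "?N \<ge> 2" by (rule card_ge2)
  obtain W :: "'a set" where W: "card W = ?N - 2 - t"
    using obtain_subset_with_card_n[of "?N - 2 - t" "UNIV::'a set"] by auto
  have fW: "finite W" by simp
  define g where "g = (\<Prod>Q\<in>W. [:-Q, 1:])"
  have "degree g \<le> sum (degree \<circ> (\<lambda>Q. [:-Q, 1::'a:])) W"
    unfolding g_def by (rule degree_prod_sum_le) simp
  also have "\<dots> = card W" by simp
  finally have dg: "degree g \<le> ?N - 2 - t" using W by simp
  have zg: "poly g P = 0 \<longleftrightarrow> P \<in> W" for P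
    unfolding g_def poly_prod by (subst prod_zero_iff) auto
  define y where "y = (\<lambda>P. poly g P ^ q)"
  have qq: "x ^ (q * q) = x" for x :: 'a
    using pow_card_same[of x] assms(2) by (simp add: power2_eq_square)
  have q0: "q \<noteq> 0" using assms(2) N2 by (intro notI) simp
  have supp: "{P. y P \<noteq> 0} = UNIV - W" using q0 zg by (auto simp: y_def)
  have "y \<in> herm_dual q (fs.span ((\<lambda>i (P::'a). P ^ i) ` {0..t}))"
    unfolding dual_char[OF assms(1)]
  proof (intro allI impI)
    fix j assume j: "j \<le> t"
    have "herm_ip q (\<lambda>P. P ^ j) y = (\<Sum>P\<in>UNIV. P ^ j * poly g P)"
      unfolding herm_ip_def y_def by (simp add: qq flip: power_mult)
    also have "\<dots> = (\<Sum>P\<in>UNIV. P ^ j * (\<Sum>l\<le>degree g. coeff g l * P ^ l))"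
      by (simp add: poly_altdef)
    also have "\<dots> = (\<Sum>l\<le>degree g. coeff g l * (\<Sum>P\<in>(UNIV::'a set). P ^ (j + l)))"
      by (simp add: sum_distrib_left sum_distrib_right power_add mult_ac sum.swap[of _ UNIV])
    also have "\<dots> = 0"
    proof (rule sum.neutral, rule ballI)
      fix l assume "l \<in> {..degree g}"
      hence jl: "j + l \<le> ?N - 2" using dg j assms(1) by auto
      have "\<not> (0 < j + l \<and> (?N - 1) dvd (j + l))"
      proof
        assume "0 < j + l \<and> (?N - 1) dvd (j + l)"
        hence "?N - 1 \<le> j + l" by (auto dest: dvd_imp_le)
        thus False using jl N2 by linarith
      qed
      thus "coeff g l * (\<Sum>P\<in>(UNIV::'a set). P ^ (j + l)) = 0"
        by (simp only: psum) simp
    qed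
    finally show "herm_ip q (\<lambda>P. P ^ j) y = 0" .
  qed
  moreover have "hamming_wt y = t + 2"
    unfolding hamming_wt_def supp using W assms(1) N2 by (simp add: card_Diff_subset)
  moreover have "y \<noteq> 0"
  proof
    assume "y = 0"
    hence "{P. y P \<noteq> 0} = {}" by simp
    hence "UNIV - W = {}" using supp by simp
    hence "card W = ?N" by (metis Diff_eq_empty_iff top.extremum_uniqueI)
    thus False using W N2 by linarith
  qed
  ultimately show ?thesis by blast
qed



lemma frob:
  assumes "prime_power q" "card (UNIV::'a::{finite,field} set) = q ^ 2"
  shows "(sum f A :: 'a) ^ q = sum (\<lambda>i. f i ^ q) A"
proof -
  obtain p n where pn: "prime p" "n > 0" "q = p ^ n" using assms(1) unfolding prime_power_def by blast
  have cp: "CHAR('a) > 0" by (rule finite_imp_CHAR_pos) simp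
  have pc: "prime CHAR('a)" by (rule prime_CHAR_semidom[OF cp])
  have "CHAR('a) dvd p ^ (n * 2)"
    using CHAR_dvd_CARD[where 'a='a] assms(2) pn(3) by (simp add: power_mult)
  hence "CHAR('a) dvd p" using prime_dvd_power pc by blast
  hence "CHAR('a) = p" using primes_dvd_imp_eq pc pn(1) by blast
  thus ?thesis using freshmans_dream_sum'[OF pc, of q n f A] pn(3) by simp
qed

definition sig :: "nat \<Rightarrow> nat \<Rightarrow> nat" where
  "sig q i = (i mod q) * q + i div q"

lemma sig_lt: "0 < q \<Longrightarrow> i < q ^ 2 \<Longrightarrow> sig q i < q ^ 2"
proof -
  assume q: "0 < q" and i: "i < q ^ 2"
  have "i div q < q" using i q by (simp add: div_less_iff_less_mult power2_eq_square)
  moreover have "i mod q < q" using q by simp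
  ultimately have "(i mod q) * q + i div q < (i mod q) * q + q" by simp
  also have "\<dots> = (i mod q + 1) * q" by simp
  also have "\<dots> \<le> q * q" using \<open>i mod q < q\<close> by (intro mult_right_mono) auto
  finally show ?thesis by (simp add: sig_def power2_eq_square)
qed

lemma sig_sig: "0 < q \<Longrightarrow> i < q ^ 2 \<Longrightarrow> sig q (sig q i) = i"
proof -
  assume q: "0 < q" and i: "i < q ^ 2"
  have d: "i div q < q" using i q by (simp add: div_less_iff_less_mult power2_eq_square)
  have "sig q i mod q = i div q" unfolding sig_def using d by simp
  moreover have "sig q i div q = i mod q" unfolding sig_def using d q by simp
  ultimately show ?thesis unfolding sig_def[of q "sig q i"] by simp
qed

lemma sig_iq: "0 < q \<Longrightarrow> i * q = sig q i + (i div q) * (q ^ 2 - 1)"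
proof -
  assume q: "0 < q"
  have "i * q = (i mod q + (i div q) * q) * q" by (metis mod_div_mult_eq)
  also have "\<dots> = (i mod q) * q + (i div q) * (q * q)" by (simp only: distrib_right mult.assoc)
  finally have h: "i * q = (i mod q) * q + (i div q) * (q * q)" .
  have qq: "q * q = (q ^ 2 - 1) + 1" using q by (simp add: power2_eq_square)
  have "(i div q) * (q * q) = (i div q) * (q ^ 2 - 1) + i div q"
    by (subst qq) (simp only: distrib_left mult_1_right)
  thus ?thesis unfolding sig_def using h by linarith
qed

lemma sig_0: "sig q 0 = 0" by (simp add: sig_def)

lemma sig_top: "0 < q \<Longrightarrow> sig q (q ^ 2 - 1) = q ^ 2 - 1"
proof -
  assume q: "0 < q"
  obtain x where x: "q = Suc x" using q by (cases q) auto
  have e: "q ^ 2 - 1 = x + x * q" unfolding x by (simp add: power2_eq_square)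
  have "(x + x * q) mod q = x" unfolding x by (simp only: mod_mult_self1) simp
  moreover have "(x + x * q) div q = x" unfolding x by (simp only: div_mult_self1) simp
  ultimately show ?thesis unfolding sig_def e by (simp add: x)
qed

lemma psum_jq:
  assumes "card (UNIV::'a::{finite,field} set) = q ^ 2"
    and i: "i \<le> q ^ 2 - 2" and j: "j \<le> q ^ 2 - 2"
  shows "(\<Sum>P\<in>(UNIV::'a set). P ^ (j + i * q)) = (if j + sig q i = q ^ 2 - 1 then -1 else 0)"
proof -
  have N2: "q ^ 2 \<ge> 2" using card_ge2[where 'a='a] assms(1) by simp
  hence q: "0 < q" by (cases q) auto
  let ?k = "j + i * q"
  have il: "i < q ^ 2" using i N2 by linarith
  have sl: "sig q i < q ^ 2" by (rule sig_lt[OF q il])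
  have sne: "sig q i \<noteq> q ^ 2 - 1"
  proof
    assume "sig q i = q ^ 2 - 1"
    hence "sig q (sig q i) = q ^ 2 - 1" using sig_top[OF q] by simp
    thus False using sig_sig[OF q il] i N2 by linarith
  qed
  have s2: "sig q i \<le> q ^ 2 - 2" using sl sne by linarith
  have k: "?k = (j + sig q i) + (i div q) * (q ^ 2 - 1)" using sig_iq[OF q, of i] by simp
  have dv: "(q ^ 2 - 1) dvd ?k \<longleftrightarrow> (q ^ 2 - 1) dvd (j + sig q i)"
    unfolding k by (simp add: dvd_add_left_iff)
  have kpos: "0 < ?k \<longleftrightarrow> j + sig q i \<noteq> 0"
  proof
    assume "0 < ?k"
    hence "j \<noteq> 0 \<or> i \<noteq> 0" by auto
    thus "j + sig q i \<noteq> 0"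
    proof
      assume "i \<noteq> 0"
      hence "sig q i \<noteq> 0" using sig_sig[OF q il] sig_0[of q] by metis
      thus ?thesis by simp
    qed simp
  next
    assume "j + sig q i \<noteq> 0"
    thus "0 < ?k" unfolding k by simp
  qed
  have main: "(0 < ?k \<and> (q ^ 2 - 1) dvd ?k) \<longleftrightarrow> j + sig q i = q ^ 2 - 1"
  proof
    assume a: "0 < ?k \<and> (q ^ 2 - 1) dvd ?k"
    then obtain r where r: "j + sig q i = (q ^ 2 - 1) * r" using dv by blast
    have "r \<noteq> 0" using r a kpos by auto
    moreover have "r < 2"
    proof (rule ccontr)
      assume "\<not> r < 2"
      hence "(q ^ 2 - 1) * 2 \<le> (q ^ 2 - 1) * r" by simp
      thus False using r s2 j N2 by linarith
    qed
    ultimately have "r = 1" by linarith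
    thus "j + sig q i = q ^ 2 - 1" using r by simp
  next
    assume a: "j + sig q i = q ^ 2 - 1"
    thus "0 < ?k \<and> (q ^ 2 - 1) dvd ?k" using kpos dv N2 by simp
  qed
  have "(\<Sum>P\<in>(UNIV::'a set). P ^ ?k) = (if 0 < ?k \<and> (card (UNIV::'a set) - 1) dvd ?k then -1 else 0)"
    by (rule psum)
  also have "\<dots> = (if j + sig q i = q ^ 2 - 1 then -1 else 0)"
    using main assms(1) by simp
  finally show ?thesis .
qed



lemma herm_mon_lc:
  assumes "prime_power q" "card (UNIV::'a::{finite,field} set) = q ^ 2" "finite A"
  shows "herm_ip q (\<lambda>P::'a. P ^ j) (lc c A) = (\<Sum>i\<in>A. c i ^ q * (\<Sum>P\<in>(UNIV::'a set). P ^ (j + i * q)))"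
proof -
  have "herm_ip q (\<lambda>P::'a. P ^ j) (lc c A) = (\<Sum>P\<in>(UNIV::'a set). P ^ j * (\<Sum>i\<in>A. c i * P ^ i) ^ q)"
    unfolding herm_ip_def lc_apply ..
  also have "\<dots> = (\<Sum>P\<in>(UNIV::'a set). P ^ j * (\<Sum>i\<in>A. c i ^ q * P ^ (i * q)))"
    by (simp add: frob[OF assms(1,2)] power_mult_distrib power_mult)
  also have "\<dots> = (\<Sum>i\<in>A. c i ^ q * (\<Sum>P\<in>(UNIV::'a set). P ^ (j + i * q)))"
    by (simp add: sum_distrib_left sum_distrib_right power_add mult_ac sum.swap[of _ UNIV A])
  finally show ?thesis .
qed

lemma hull_char:
  assumes "prime_power q" "card (UNIV::'a::{finite,field} set) = q ^ 2" "t \<le> q ^ 2 - 2"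
  shows "lc c {0..t} \<in> herm_dual q (fs.span ((\<lambda>i (P::'a). P ^ i) ` {0..t})) \<longleftrightarrow>
         (\<forall>i\<in>{0..t}. q ^ 2 - 2 - t < sig q i \<longrightarrow> c i = 0)"
proof -
  have N2: "q ^ 2 \<ge> 2" using card_ge2[where 'a='a] assms(2) by simp
  hence q: "0 < q" by (cases q) auto
  have H: "herm_ip q (\<lambda>P::'a. P ^ j) (lc c {0..t}) =
      (\<Sum>i\<in>{0..t}. c i ^ q * (if j + sig q i = q ^ 2 - 1 then -1 else 0))" if j: "j \<le> t" for j
  proof -
    have "herm_ip q (\<lambda>P::'a. P ^ j) (lc c {0..t}) = (\<Sum>i\<in>{0..t}. c i ^ q * (\<Sum>P\<in>(UNIV::'a set). P ^ (j + i * q)))"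
      by (rule herm_mon_lc[OF assms(1,2)]) simp
    also have "\<dots> = (\<Sum>i\<in>{0..t}. c i ^ q * (if j + sig q i = q ^ 2 - 1 then -1 else 0))"
    proof (rule sum.cong[OF refl])
      fix i assume "i \<in> {0..t}"
      hence i: "i \<le> q ^ 2 - 2" using assms(3) by simp
      have j': "j \<le> q ^ 2 - 2" using j assms(3) by simp
      show "c i ^ q * (\<Sum>P\<in>(UNIV::'a set). P ^ (j + i * q)) = c i ^ q * (if j + sig q i = q ^ 2 - 1 then -1 else 0)"
        by (simp only: psum_jq[OF assms(2) i j'])
    qed
    finally show ?thesis .
  qed
  have inj: "i = i'" if "i < q ^ 2" "i' < q ^ 2" "sig q i = sig q i'" for i i'
    using sig_sig[OF q that(1)] sig_sig[OF q that(2)] that(3) by metis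
  show ?thesis
    unfolding dual_char[OF assms(3)[folded assms(2)]]
  proof safe
    fix i0 assume all: "\<forall>j\<le>t. herm_ip q (\<lambda>P::'a. P ^ j) (lc c {0..t}) = 0"
      and i0: "i0 \<in> {0..t}" and lt: "q ^ 2 - 2 - t < sig q i0"
    have i0l: "i0 < q ^ 2" using i0 assms(3) N2 by auto
    have sl: "sig q i0 < q ^ 2" by (rule sig_lt[OF q i0l])
    define j where "j = q ^ 2 - 1 - sig q i0"
    have j: "j \<le> t" using lt sl N2 assms(3) unfolding j_def by linarith
    have "(\<Sum>i\<in>{0..t}. c i ^ q * (if j + sig q i = q ^ 2 - 1 then -1 else 0))
        = (\<Sum>i\<in>{0..t}. if i = i0 then - (c i ^ q) else 0)"
    proof (rule sum.cong[OF refl])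
      fix i assume i: "i \<in> {0..t}"
      have il: "i < q ^ 2" using i assms(3) N2 by auto
      have "j + sig q i = q ^ 2 - 1 \<longleftrightarrow> i = i0"
      proof
        assume "j + sig q i = q ^ 2 - 1"
        hence "sig q i = sig q i0" unfolding j_def using sl by linarith
        thus "i = i0" using inj il i0l by blast
      next
        assume "i = i0"
        thus "j + sig q i = q ^ 2 - 1" unfolding j_def using sl by simp
      qed
      thus "c i ^ q * (if j + sig q i = q ^ 2 - 1 then -1 else 0) = (if i = i0 then - (c i ^ q) else 0)"
        by simp
    qed
    also have "\<dots> = - (c i0 ^ q)" using i0 by (simp add: sum.delta)
    finally have "- (c i0 ^ q) = 0" using H[OF j] all j by simp
    thus "c i0 = 0" by simp
  next
    fix j assume all: "\<forall>i\<in>{0..t}. q ^ 2 - 2 - t < sig q i \<longrightarrow> c i = 0" and j: "j \<le> t"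
    have "(\<Sum>i\<in>{0..t}. c i ^ q * (if j + sig q i = q ^ 2 - 1 then -1 else 0)) = 0"
    proof (rule sum.neutral, rule ballI)
      fix i assume i: "i \<in> {0..t}"
      show "c i ^ q * (if j + sig q i = q ^ 2 - 1 then -1 else 0) = 0"
      proof (cases "j + sig q i = q ^ 2 - 1")
        case True
        hence "q ^ 2 - 2 - t < sig q i" using j N2 assms(3) by linarith
        hence "c i = 0" using all i by blast
        thus ?thesis using q by simp
      qed simp
    qed
    thus "herm_ip q (\<lambda>P::'a. P ^ j) (lc c {0..t}) = 0" using H[OF j] by simp
  qed
qed

lemma hull_eq:
  assumes "prime_power q" "card (UNIV::'a::{finite,field} set) = q ^ 2" "t \<le> q ^ 2 - 2"
  shows "fs.span ((\<lambda>i (P::'a). P ^ i) ` {0..t}) \<inter> herm_dual q (fs.span ((\<lambda>i (P::'a). P ^ i) ` {0..t}))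
       = fs.span ((\<lambda>i (P::'a). P ^ i) ` {i\<in>{0..t}. sig q i \<le> q ^ 2 - 2 - t})"
    (is "?E \<inter> ?C = fs.span (?m ` ?S)")
proof -
  have sub: "{0..t} \<subseteq> {..card (UNIV::'a set) - 2}" using assms by auto
  have subS: "?S \<subseteq> {..card (UNIV::'a set) - 2}" using assms by auto
  have EC: "?E = range (\<lambda>c. lc c {0..t})" by (rule mon_span[OF sub])
  have SC: "fs.span (?m ` ?S) = range (\<lambda>c. lc c ?S)" by (rule mon_span[OF subS])
  have "x \<in> ?E \<inter> ?C \<longleftrightarrow> x \<in> fs.span (?m ` ?S)" for x
    proof
      assume x: "x \<in> ?E \<inter> ?C"
      then obtain c where c: "x = lc c {0..t}" using EC by blast
      have "lc c {0..t} \<in> ?C" using x c by simp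
      hence z: "\<forall>i\<in>{0..t}. q ^ 2 - 2 - t < sig q i \<longrightarrow> c i = 0" using hull_char[OF assms] by blast
      have "lc c {0..t} = lc c ?S" unfolding lc_def
        by (rule sum.mono_neutral_right) (use z in \<open>auto simp: fscale_def fun_eq_iff\<close>)
      thus "x \<in> fs.span (?m ` ?S)" unfolding SC c by blast
    next
      assume "x \<in> fs.span (?m ` ?S)"
      then obtain c where x: "x = lc c ?S" unfolding SC by blast
      define c' where "c' = (\<lambda>i. if i \<in> ?S then c i else 0)"
      have e: "lc c ?S = lc c' {0..t}" unfolding lc_def c'_def
        by (rule sum.mono_neutral_cong_left) (auto simp: fscale_def fun_eq_iff)
      have "\<forall>i\<in>{0..t}. q ^ 2 - 2 - t < sig q i \<longrightarrow> c' i = 0" unfolding c'_def by auto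
      hence "lc c' {0..t} \<in> ?C" using hull_char[OF assms] by blast
      moreover have "lc c' {0..t} \<in> ?E" unfolding EC by blast
      ultimately show "x \<in> ?E \<inter> ?C" unfolding x e by blast
    qed
  thus ?thesis by blast
qed



lemma lex_le:
  fixes q x0 x1 y0 y1 :: nat
  assumes "x0 < q" "y0 < q"
  shows "x0 + x1 * q \<le> y0 + y1 * q \<longleftrightarrow> x1 < y1 \<or> (x1 = y1 \<and> x0 \<le> y0)"
proof (cases "x1 < y1")
  case True
  have "x0 + x1 * q < q + x1 * q" using assms by simp
  also have "\<dots> = Suc x1 * q" by simp
  also have "\<dots> \<le> y1 * q" using True by (intro mult_le_mono1) simp
  finally show ?thesis using True by simp
next
  case False
  show ?thesis
  proof (cases "x1 = y1")
    case False
    hence lt: "y1 < x1" using \<open>\<not> x1 < y1\<close> by simp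
    have "y0 + y1 * q < q + y1 * q" using assms by simp
    also have "\<dots> = Suc y1 * q" by simp
    also have "\<dots> \<le> x1 * q" using lt by (intro mult_le_mono1) simp
    finally show ?thesis using lt by simp
  qed simp
qed

lemma count_T:
  fixes q t b0 b1 :: nat
  assumes q: "0 < q" and b: "b0 < q" "b1 < q" and t: "t = b0 + b1 * q" and tN: "t \<le> q ^ 2 - 2" and q2: "2 \<le> q ^ 2"
  shows "card {i\<in>{0..t}. q ^ 2 - 2 - t < sig q i} =
     b1 * b1 + 2 * (b0 + b1 + 1 - q) + (if q - 1 \<le> b0 + b1 then 1 else 0)"
proof -
  define F where "F a1 = {a0. a0 < q \<and> (a1 < b1 \<or> (a1 = b1 \<and> a0 \<le> b0)) \<and>
      (q - 1 - b1 < a0 \<or> (a0 = q - 1 - b1 \<and> q - 1 - b0 \<le> a1))}" for a1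
  define phi where "phi = (\<lambda>(a1::nat, a0::nat). a0 + a1 * q)"
  have Nt: "q ^ 2 - 1 - t = (q - 1 - b0) + (q - 1 - b1) * q"
  proof -
    have "q ^ 2 - 1 = (q - 1) + (q - 1) * q" using q
      by (cases q) (auto simp: power2_eq_square)
    moreover have "(q - 1 - b1) * q + b1 * q = (q - 1) * q" using b
      by (simp flip: add_mult_distrib)
    ultimately show ?thesis using b t by simp
  qed
  have T_eq: "{i\<in>{0..t}. q ^ 2 - 2 - t < sig q i} = phi ` (SIGMA a1:{..<q}. F a1)"
  proof (intro equalityI subsetI)
    fix i assume "i \<in> {i\<in>{0..t}. q ^ 2 - 2 - t < sig q i}"
    hence i: "i \<le> t" "q ^ 2 - 2 - t < sig q i" by auto
    define a0 where "a0 = i mod q"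
    define a1 where "a1 = i div q"
    have a0: "a0 < q" unfolding a0_def using q by simp
    have "t < q + b1 * q" using b t by simp
    also have "\<dots> = Suc b1 * q" by simp
    also have "\<dots> \<le> q * q" using b by (intro mult_le_mono1) simp
    finally have "t < q * q" .
    hence "i < q * q" using i by linarith
    hence a1: "a1 < q" unfolding a1_def using q by (simp add: div_less_iff_less_mult)
    have ia: "i = a0 + a1 * q" unfolding a0_def a1_def by simp
    have sa: "sig q i = a1 + a0 * q" unfolding sig_def a0_def a1_def by simp
    have c1: "a1 < b1 \<or> (a1 = b1 \<and> a0 \<le> b0)" using i(1) lex_le[OF a0 b(1)] ia t by simp
    have "q ^ 2 - 1 - t \<le> sig q i" using i(2) by linarith
    hence "(q - 1 - b0) + (q - 1 - b1) * q \<le> a1 + a0 * q" using Nt sa by simp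
    hence c2: "q - 1 - b1 < a0 \<or> (a0 = q - 1 - b1 \<and> q - 1 - b0 \<le> a1)"
      using lex_le[of "q - 1 - b0" q a1 "q - 1 - b1" a0] q a1 by auto
    have "(a1, a0) \<in> (SIGMA a1:{..<q}. F a1)" using a0 a1 c1 c2 unfolding F_def by simp
    thus "i \<in> phi ` (SIGMA a1:{..<q}. F a1)" unfolding phi_def ia by force
  next
    fix i assume "i \<in> phi ` (SIGMA a1:{..<q}. F a1)"
    then obtain a1 a0 where a: "a1 < q" "a0 \<in> F a1" "i = a0 + a1 * q" unfolding phi_def by auto
    have a0: "a0 < q" and c1: "a1 < b1 \<or> (a1 = b1 \<and> a0 \<le> b0)"
      and c2: "q - 1 - b1 < a0 \<or> (a0 = q - 1 - b1 \<and> q - 1 - b0 \<le> a1)" using a(2) unfolding F_def by auto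
    have "i \<le> t" using c1 lex_le[OF a0 b(1)] a(3) t by simp
    moreover have "sig q i = a1 + a0 * q" unfolding sig_def a(3) using a0 by simp
    moreover have "(q - 1 - b0) + (q - 1 - b1) * q \<le> a1 + a0 * q"
      using lex_le[of "q - 1 - b0" q a1 "q - 1 - b1" a0] q a(1) c2 by auto
    ultimately have "i \<le> t" "q ^ 2 - 1 - t \<le> sig q i" using Nt by linarith+
    moreover have "t + 2 \<le> q ^ 2" using tN q2 by linarith
    ultimately show "i \<in> {i\<in>{0..t}. q ^ 2 - 2 - t < sig q i}" by auto
  qed
  have inj: "inj_on phi (SIGMA a1:{..<q}. F a1)"
  proof (rule inj_onI)
    fix x y assume x: "x \<in> (SIGMA a1:{..<q}. F a1)" and y: "y \<in> (SIGMA a1:{..<q}. F a1)" and e: "phi x = phi y"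
    obtain x1 x0 y1 y0 where xy: "x = (x1, x0)" "y = (y1, y0)" by fastforce
    have "x0 < q" "y0 < q" using x y xy unfolding F_def by auto
    hence "(x0 + x1 * q) mod q = x0" "(y0 + y1 * q) mod q = y0"
          "(x0 + x1 * q) div q = x1" "(y0 + y1 * q) div q = y1" using q by auto
    thus "x = y" using e xy unfolding phi_def by (metis case_prod_conv)
  qed
  have fin: "finite (F a1)" for a1 unfolding F_def by simp
  have "card {i\<in>{0..t}. q ^ 2 - 2 - t < sig q i} = card (SIGMA a1:{..<q}. F a1)"
    unfolding T_eq by (rule card_image[OF inj])
  also have "\<dots> = (\<Sum>a1<q. card (F a1))" by (rule card_SigmaI) (auto simp: fin)
  also have "\<dots> = (\<Sum>a1<Suc b1. card (F a1))"
    by (rule sum.mono_neutral_right) (use b in \<open>auto simp: F_def\<close>)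
  also have "\<dots> = (\<Sum>a1<b1. card (F a1)) + card (F b1)" by simp
  also have "(\<Sum>a1<b1. card (F a1)) = (\<Sum>a1<b1. b1 + (if q - 1 - b0 \<le> a1 then 1 else 0))"
  proof (rule sum.cong[OF refl])
    fix a1 assume "a1 \<in> {..<b1}"
    hence "F a1 = {q - b1..<q} \<union> (if q - 1 - b0 \<le> a1 then {q - 1 - b1} else {})"
      unfolding F_def using b by auto
    thus "card (F a1) = b1 + (if q - 1 - b0 \<le> a1 then 1 else 0)" using b by auto
  qed
  also have "\<dots> = b1 * b1 + card {q - 1 - b0..<b1}"
  proof -
    have ivl: "{..<b1} \<inter> Collect ((\<le>) (q - Suc b0)) = {q - Suc b0..<b1}" by auto
    show ?thesis by (simp add: sum.distrib sum.If_cases ivl)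
  qed
  also have "card (F b1) = card {q - b1..b0} + (if q - 1 \<le> b0 + b1 then 1 else 0)"
  proof -
    have "F b1 = {q - b1..b0} \<union> (if q - 1 \<le> b0 + b1 then {q - 1 - b1} else {})"
      unfolding F_def using b by auto
    thus ?thesis using b by auto
  qed
  finally show ?thesis using b by simp
qed



theorem mainTheorem2:
  fixes q t b0 b1 :: nat
  assumes "prime_power q"
    and "card (UNIV :: 'a::{finite,field} set) = q ^ 2"
    and "t \<le> q ^ 2 - 2"
    and "t = b0 + b1 * q" and "b0 \<le> q - 1" and "b1 \<le> q - 1"
  shows "eaqecc_params q (D_code {0..t} :: ('a \<Rightarrow> 'a) set) =
      (if b0 + b1 < q - 1
       then (q ^ 2, (int q - int b1) ^ 2 - 2 * int b0 - 2, t + 2, b1 ^ 2)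
       else (q ^ 2, (int q - int b1 - 1) ^ 2, t + 2,
             nat (int (b1 ^ 2) + 2 * (int b0 + int b1 - int q) + 3)))"
proof -
  let ?m = "\<lambda>i (P::'a). P ^ i"
  define E where "E = fs.span (?m ` {0..t})"
  define C where "C = herm_dual q E"
  define S where "S = {i\<in>{0..t}. sig q i \<le> q ^ 2 - 2 - t}"
  define T where "T = {i\<in>{0..t}. q ^ 2 - 2 - t < sig q i}"
  have N2: "q ^ 2 \<ge> 2" using card_ge2[where 'a='a] assms(2) by simp
  hence q: "0 < q" by (cases q) auto
  have q2: "2 \<le> q"
  proof (rule ccontr)
    assume "\<not> 2 \<le> q" hence "q = 1" using q by simp
    thus False using N2 by simp
  qed
  have b: "b0 < q" "b1 < q" using assms(5,6) q by auto
  have tN: "t \<le> card (UNIV::'a set) - 2" using assms(2,3) by simp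
  have sub: "{0..t} \<subseteq> {..card (UNIV::'a set) - 2}" using tN by auto
  have subS: "S \<subseteq> {..card (UNIV::'a set) - 2}" using tN by (auto simp: S_def)
  have dE: "code_dim E = t + 1" unfolding code_dim_eq E_def mon_dim[OF sub] by simp
  have EC: "E \<inter> C = fs.span (?m ` S)" unfolding E_def C_def S_def by (rule hull_eq[OF assms(1,2,3)])
  have dEC: "code_dim (E \<inter> C) = card S" unfolding code_dim_eq EC mon_dim[OF subS] ..
  have ST: "card S + card T = t + 1"
  proof -
    have "S \<union> T = {0..t}" "S \<inter> T = {}" unfolding S_def T_def by auto
    hence "card S + card T = card {0..t}" by (metis card_Un_disjoint finite_Un finite_atLeastAtMost)
    thus ?thesis by simp
  qed
  have cT: "card T = b1 * b1 + 2 * (b0 + b1 + 1 - q) + (if q - 1 \<le> b0 + b1 then 1 else 0)"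
    unfolding T_def by (rule count_T[OF q b assms(4) assms(3) N2])
  have md: "min_dist C = t + 2"
  proof -
    obtain y where y: "y \<in> C" "y \<noteq> 0" "hamming_wt y = t + 2"
      using wt_upper[OF tN assms(2)] unfolding C_def E_def by blast
    show ?thesis unfolding min_dist_def
    proof (rule Min_eqI)
      show "finite (hamming_wt ` (C - {0}))" by simp
      show "t + 2 \<in> hamming_wt ` (C - {0})" using y by force
      fix w assume "w \<in> hamming_wt ` (C - {0})"
      then obtain z where z: "z \<in> C" "z \<noteq> 0" "w = hamming_wt z" by blast
      show "t + 2 \<le> w" using wt_lower[OF tN q] z unfolding C_def E_def by blast
    qed
  qed
  have DE: "(D_code {0..t} :: ('a \<Rightarrow> 'a) set) = E" unfolding D_code_eq E_def ..
  have cc: "code_dim E - code_dim (E \<inter> C) = card T" using dE dEC ST by simp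
  have cT2: "\<not> b0 + b1 < q - 1 \<Longrightarrow> card T = nat (int (b1 ^ 2) + 2 * (int b0 + int b1 - int q) + 3)"
  proof -
    assume "\<not> b0 + b1 < q - 1"
    hence h: "q \<le> b0 + b1 + 1" "q - 1 \<le> b0 + b1" by auto
    hence "int (card T) = int (b1 * b1) + 2 * (int b0 + int b1 + 1 - int q) + 1"
      using cT by (simp add: of_nat_diff)
    thus ?thesis by (simp add: power2_eq_square)
  qed
  show ?thesis
    unfolding eaqecc_params_def DE Let_def C_def[symmetric] cc md
    using assms(2) dE cT cT2 b q2 assms(4)
    by (auto simp: power2_eq_square algebra_simps)
qed

end
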